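(* Let $\Omega$ be a triangulation whose edges are labeled as terminal-, internal- and frontier-edges, and let $R$ be a terminal-edge region of $\Omega$. Apply the polygon construction (traversal) procedure starting from a seed triangle of $R$. During this procedure, each triangle of $R$ is visited at most $3$ times.
   Context: Let $\Omega$ be a triangulation in which every triangle has a designated unique longest edge (ties between equal-length edges are broken arbitrarily but consistently). Edges are labeled as follows. An edge shared by two triangles is: - a terminal-edge if it is the longest edge of both triangles; - a frontier-edge if it is the longest edge of neither triangle; - an internal-edge otherwise. Edges belonging to a single triangle are boundary edges and are treated as frontier-edges. For a triangle $t_0$, $\mathrm{Lepp}(t_0)$ is the sequence $t_0,t_1,\dots$ in which each $t_i$ is the neighbor of $t_{i-1}$ across the longest edge of $t_{i-1}$, ending at a terminal (or boundary) edge. A terminal-edge region is the union of all triangles whose Lepp ends at the same terminal-edge. It is bounded by frontier-edges, and its triangles are connected to each other across internal-edges (and terminal-edges). The polygon construction procedure builds the boundary polygon of $R$ as a counter-clockwise list of frontier-edge vertices. It starts from a seed triangle $t$ of $R$: - If $t$ has 3 frontier-edges, $t$ itself is the polygon. - Otherwise the frontier-edges of $t$ (if any) are appended in counter-clockwise order. The initial vertex $v_{init}$ and the current endpoint $v_{end}$ are recorded (if $t$ has no frontier-edge, both are set to an arbitrary vertex of $t$). The procedure then repeatedly moves from the current triangle to a neighboring triangle $t'$ of $R$, always across a non-frontier edge (an internal-edge), choosing the neighbor that contains $v_{end}$: - If $t'$ has one frontier-edge incident to $v_{end}$, that edge is appended, $v_{end}$ is updated to its other endpoint, and the procedure moves to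 the not-previously-visited internal-edge neighbor containing $v_{end}$. - If $t'$ has two frontier-edges, both are appended, $v_{end}$ is updated, and the procedure returns to the previously visited triangle. - If $t'$ has no frontier-edge, the procedure moves to the internal-edge neighbor, in counter-clockwise order, that contains $v_{end}$. The procedure stops when $v_{end}=v_{init}$ and the walk returns to the starting triangle. Each move into a triangle counts as one visit of that triangle. *)

theory Defs
  imports "HOL-Analysis.Analysis"
begin

text \<open>Vertices are points of the plane (complex numbers); a triangle is the set of its
  three vertices; an edge is a two-element vertex set.\<close>

definition triangulation :: "complex set set \<Rightarrow> bool" where
  "triangulation \<Omega> \<longleftrightarrow> finite \<Omega> \<and>
     (\<forall>t\<in>\<Omega>. card t = 3 \<and> \<not> collinear t) \<and>
     (\<forall>t1\<in>\<Omega>. \<forall>t2\<in>\<Omega>. convex hull t1 \<inter> convex hull t2 = convex hull (t1 \<inter> t2))"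

definition longest_edge_choice :: "complex set set \<Rightarrow> (complex set \<Rightarrow> complex set) \<Rightarrow> bool" where
  "longest_edge_choice \<Omega> lg \<longleftrightarrow>
     (\<forall>t\<in>\<Omega>. \<exists>a b. a \<in> t \<and> b \<in> t \<and> a \<noteq> b \<and> lg t = {a, b} \<and>
                   (\<forall>c\<in>t. \<forall>d\<in>t. dist c d \<le> dist a b))"

definition edges_of :: "complex set \<Rightarrow> complex set set" where
  "edges_of t = {e. e \<subseteq> t \<and> card e = 2}"

definition frontier_edge :: "complex set set \<Rightarrow> (complex set \<Rightarrow> complex set) \<Rightarrow> complex set \<Rightarrow> bool" where
  "frontier_edge \<Omega> lg e \<longleftrightarrow>
     card {t\<in>\<Omega>. e \<subseteq> t} \<le> 1 \<or> (\<forall>t\<in>\<Omega>. e \<subseteq> t \<longrightarrow> lg t \<noteq> e)"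

definition lepp_step :: "complex set set \<Rightarrow> (complex set \<Rightarrow> complex set) \<Rightarrow> complex set \<Rightarrow> complex set \<Rightarrow> bool" where
  "lepp_step \<Omega> lg t t' \<longleftrightarrow> t \<in> \<Omega> \<and> t' \<in> \<Omega> \<and> t \<noteq> t' \<and> lg t \<subseteq> t'"

text \<open>Lepp(t) ends at edge e: the Lepp path reaches a triangle t' whose longest edge e is
  either terminal (longest edge of the neighbour too) or a boundary edge (no neighbour).\<close>
definition lepp_ends_at :: "complex set set \<Rightarrow> (complex set \<Rightarrow> complex set) \<Rightarrow> complex set \<Rightarrow> complex set \<Rightarrow> bool" where
  "lepp_ends_at \<Omega> lg t e \<longleftrightarrow>
     (\<exists>t'. (lepp_step \<Omega> lg)\<^sup>*\<^sup>* t t' \<and> t' \<in> \<Omega> \<and> lg t' = e \<and>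
           (\<forall>t''\<in>\<Omega>. t'' \<noteq> t' \<and> e \<subseteq> t'' \<longrightarrow> lg t'' = e))"

definition terminal_edge_region :: "complex set set \<Rightarrow> (complex set \<Rightarrow> complex set) \<Rightarrow> complex set set \<Rightarrow> bool" where
  "terminal_edge_region \<Omega> lg R \<longleftrightarrow>
     (\<exists>e. R = {t\<in>\<Omega>. lepp_ends_at \<Omega> lg t e} \<and> R \<noteq> {})"

definition ccw :: "complex \<Rightarrow> complex \<Rightarrow> complex \<Rightarrow> bool" where
  "ccw a b c \<longleftrightarrow> 0 < Im (cnj (b - a) * (c - a))"

definition next_vertex :: "complex set \<Rightarrow> complex \<Rightarrow> complex" where
  "next_vertex t v = (THE w. w \<in> t \<and> w \<noteq> v \<and> (\<forall>u\<in>t - {v, w}. ccw v w u))"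

definition neighbor_across :: "complex set set \<Rightarrow> complex set \<Rightarrow> complex set \<Rightarrow> complex set" where
  "neighbor_across \<Omega> t e = (THE t'. t' \<in> \<Omega> \<and> t' \<noteq> t \<and> e \<subseteq> t')"

text \<open>State: (current triangle, v_end).
  This reproduces the three cases of the procedure (pivoting around v_end).\<close>
definition poly_step :: "complex set set \<Rightarrow> (complex set \<Rightarrow> complex set) \<Rightarrow>
    complex set \<times> complex \<Rightarrow> complex set \<times> complex" where
  "poly_step \<Omega> lg s = (case s of (t, v) \<Rightarrow>
     (let w = next_vertex t v in
      if frontier_edge \<Omega> lg {v, w} then (t, w) else (neighbor_across \<Omega> t {v, w}, v)))"

definition poly_run :: "complex set set \<Rightarrow> (complex set \<Rightarrow> complex set) \<Rightarrow>
    complex set \<Rightarrow> complex \<Rightarrow> nat \<Rightarrow> complex set \<times> complex" where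
  "poly_run \<Omega> lg t0 ve i = (poly_step \<Omega> lg ^^ i) (t0, ve)"

text \<open>Initialisation at the seed t0: the frontier-edges of t0 form the counter-clockwise chain
  vi -> ... -> ve of k < 3 edges (k = 0: no frontier-edge, vi = ve arbitrary vertex of t0).\<close>
definition seed_init :: "complex set set \<Rightarrow> (complex set \<Rightarrow> complex set) \<Rightarrow>
    complex set \<Rightarrow> complex \<Rightarrow> complex \<Rightarrow> bool" where
  "seed_init \<Omega> lg t0 vi ve \<longleftrightarrow> vi \<in> t0 \<and>
     (\<exists>k<3. ve = (next_vertex t0 ^^ k) vi \<and>
        {e \<in> edges_of t0. frontier_edge \<Omega> lg e} =
        {{(next_vertex t0 ^^ j) vi, (next_vertex t0 ^^ Suc j) vi} | j. j < k})"

definition visits :: "complex set set \<Rightarrow> (complex set \<Rightarrow> complex set) \<Rightarrow>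
    complex set \<Rightarrow> complex \<Rightarrow> nat \<Rightarrow> complex set \<Rightarrow> nat" where
  "visits \<Omega> lg t0 ve n t = card {i. i < n \<and>
      fst (poly_run \<Omega> lg t0 ve i) \<noteq> fst (poly_run \<Omega> lg t0 ve (Suc i)) \<and>
      fst (poly_run \<Omega> lg t0 ve (Suc i)) = t}"

end

theory Submission
  imports Defs
begin


definition cr :: "complex \<Rightarrow> complex \<Rightarrow> complex \<Rightarrow> real" where
  "cr a b c = (Re b - Re a)*(Im c - Im a) - (Im b - Im a)*(Re c - Re a)"

lemma ccw_cr: "ccw a b c \<longleftrightarrow> 0 < cr a b c"
  by (simp add: ccw_def cr_def algebra_simps)

lemma ccw_cyc: "ccw a b c \<Longrightarrow> ccw b c a"
  unfolding ccw_cr cr_def by (smt (verit) mult.commute right_diff_distrib left_diff_distrib)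

lemma ccw_anti: "ccw a b c \<Longrightarrow> \<not> ccw a c b"
  unfolding ccw_cr cr_def by (smt (verit) mult.commute)

lemma ccw_tri:
  assumes "\<not> collinear {a,b,c}" shows "ccw a b c \<or> ccw a c b"
proof (rule ccontr)
  assume "\<not> (ccw a b c \<or> ccw a c b)"
  hence z: "cr a b c = 0" unfolding ccw_cr cr_def by (smt (verit) mult.commute)
  have "collinear {b,a,c}"
  proof (cases "b = a")
    case True then show ?thesis by (simp add: collinear_2)
  next
    case False
    define k where "k = Re ((c - a) / (b - a))"
    have "Im ((c - a) / (b - a)) = 0"
      using z False by (simp add: cr_def Im_divide algebra_simps)
    hence "(c - a) / (b - a) = of_real k" unfolding k_def by (simp add: complex_eq_iff)
    hence "c - a = k *\<^sub>R (b - a)" using False by (simp add: scaleR_conv_of_real field_simps)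
    thus ?thesis by (simp add: collinear_3 collinear_lemma)
  qed
  moreover have "{b,a,c} = {a,b,c}" by auto
  ultimately show False using assms by simp
qed

lemma cr_comb: "u + v + w = 1 \<Longrightarrow> cr a b (u *\<^sub>R a + v *\<^sub>R b + w *\<^sub>R c) = w * cr a b c"
proof -
  assume "u + v + w = 1" hence u: "u = 1 - v - w" by simp
  show ?thesis unfolding u by (simp add: cr_def algebra_simps)
qed

lemma cr_comb2: "u + v = 1 \<Longrightarrow> cr a b (u *\<^sub>R a + v *\<^sub>R b) = 0"
proof -
  assume "u + v = 1" hence u: "u = 1 - v" by simp
  show ?thesis unfolding u by (simp add: cr_def algebra_simps)
qed

lemma scale_solve:
  fixes a b y x :: complex
  assumes "D \<noteq> 0" "D *\<^sub>R x = p *\<^sub>R a + q *\<^sub>R b + r *\<^sub>R y"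
  shows "x = (p / D) *\<^sub>R a + (q / D) *\<^sub>R b + (r / D) *\<^sub>R y"
proof -
  have "x = (1/D) *\<^sub>R (D *\<^sub>R x)" using assms(1) by simp
  also have "\<dots> = (p / D) *\<^sub>R a + (q / D) *\<^sub>R b + (r / D) *\<^sub>R y"
    unfolding assms(2) by (simp add: scaleR_add_right)
  finally show ?thesis .
qed

lemma bary_raw:
  "cr a b y *\<^sub>R x = (cr a b y - cr a x y - cr a b x) *\<^sub>R a + (cr a x y) *\<^sub>R b + (cr a b x) *\<^sub>R y"
  by (simp add: complex_eq_iff cr_def algebra_simps)

lemma tri_eq:
  assumes "card t = 3" "a \<in> t" "b \<in> t" "x \<in> t" "a \<noteq> b" "a \<noteq> x" "b \<noteq> x"
  shows "t = {a,b,x}"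
proof -
  have "{a,b,x} \<subseteq> t" using assms by auto
  moreover have "card {a,b,x} = 3" using assms by auto
  moreover have "finite t" using assms(1) card.infinite by fastforce
  ultimately show ?thesis using assms(1) by (metis card_subset_eq)
qed


lemma hull3I: "0 \<le> u \<Longrightarrow> 0 \<le> v \<Longrightarrow> 0 \<le> w \<Longrightarrow> u + v + w = 1 \<Longrightarrow>
  u *\<^sub>R a + v *\<^sub>R b + w *\<^sub>R c \<in> convex hull {a,b,c}"
  unfolding convex_hull_3 by (rule CollectI, rule exI[of _ u], rule exI[of _ v], rule exI[of _ w]) simp

lemma same_side:
  assumes T: "triangulation \<Omega>" and t1: "t1 \<in> \<Omega>" and t2: "t2 \<in> \<Omega>" and ne: "t1 \<noteq> t2"
    and ab: "a \<in> t1" "b \<in> t1" "a \<in> t2" "b \<in> t2" "a \<noteq> b"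
    and x: "x \<in> t1" "x \<noteq> a" "x \<noteq> b" and y: "y \<in> t2" "y \<noteq> a" "y \<noteq> b"
    and cx: "ccw a b x" and cy: "ccw a b y"
  shows False
proof -
  have c3: "card t1 = 3" "card t2 = 3" using T t1 t2 unfolding triangulation_def by auto
  have e1: "t1 = {a,b,x}" using tri_eq[OF c3(1)] ab x by auto
  have e2: "t2 = {a,b,y}" using tri_eq[OF c3(2)] ab y by auto
  have "x \<noteq> y" using e1 e2 ne by auto
  hence I: "t1 \<inter> t2 = {a,b}" using e1 e2 x y by auto
  have HH: "convex hull t1 \<inter> convex hull t2 = convex hull (t1 \<inter> t2)"
    using T t1 t2 unfolding triangulation_def by blast
  have H: "convex hull {a,b,x} \<inter> convex hull {a,b,y} = convex hull {a,b}"
    using HH unfolding I by (simp only: e1 e2)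
  define D where "D = cr a b y"
  have D: "D > 0" using cy unfolding D_def ccw_cr .
  define be where "be = cr a x y / D"
  define ga where "ga = cr a b x / D"
  define al where "al = 1 - be - ga"
  have xe0: "x = ((D - cr a x y - cr a b x)/D) *\<^sub>R a + be *\<^sub>R b + ga *\<^sub>R y"
    unfolding be_def ga_def by (rule scale_solve) (use D in simp, unfold D_def, rule bary_raw)
  have eq: "(D - cr a x y - cr a b x)/D = al" unfolding al_def be_def ga_def using D
    by (simp add: diff_divide_distrib)
  have xe: "x = al *\<^sub>R a + be *\<^sub>R b + ga *\<^sub>R y" using xe0 unfolding eq .
  have ga: "ga > 0" using cx D unfolding ga_def ccw_cr by auto
  define s where "s = 1 / (1 + 2 * \<bar>al\<bar> + 2 * \<bar>be\<bar>)"
  have s0: "s > 0" unfolding s_def by (simp add: add_pos_nonneg)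
  have s1: "s * (1 + 2 * \<bar>al\<bar> + 2 * \<bar>be\<bar>) = 1" unfolding s_def
    by (simp add: add_pos_nonneg)
  have "s * 1 \<le> s * (1 + 2 * \<bar>al\<bar> + 2 * \<bar>be\<bar>)"
    by (rule mult_left_mono) (use s0 in auto)
  hence sle: "s \<le> 1" using s1 by simp
  have "s * (1 + 2 * \<bar>al\<bar>) \<le> s * (1 + 2 * \<bar>al\<bar> + 2 * \<bar>be\<bar>)"
    by (rule mult_left_mono) (use s0 in auto)
  hence sa: "s * \<bar>al\<bar> * 2 + s \<le> 1" using s1 by (simp add: algebra_simps)
  have "s * (1 + 2 * \<bar>be\<bar>) \<le> s * (1 + 2 * \<bar>al\<bar> + 2 * \<bar>be\<bar>)"
    by (rule mult_left_mono) (use s0 in auto)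
  hence sb: "s * \<bar>be\<bar> * 2 + s \<le> 1" using s1 by (simp add: algebra_simps)
  define P where "P = ((1 - s)/2) *\<^sub>R a + ((1 - s)/2) *\<^sub>R b + s *\<^sub>R x"
  have P1: "P \<in> convex hull {a,b,x}" unfolding P_def
    by (rule hull3I) (use s0 sle in auto)
  have A: "(1 - s)/2 + s * al \<ge> 0"
  proof -
    note sa
    moreover have "- \<bar>al\<bar> \<le> al" by (cases "al \<ge> 0") auto
    hence "s * (- \<bar>al\<bar>) \<le> s * al" using s0 by (intro mult_left_mono) auto
    hence "- (s * \<bar>al\<bar>) \<le> s * al" by simp
    ultimately show ?thesis by (simp add: field_simps)
  qed
  have B: "(1 - s)/2 + s * be \<ge> 0"
  proof -
    note sb
    moreover have "- \<bar>be\<bar> \<le> be" by (cases "be \<ge> 0") auto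
    hence "s * (- \<bar>be\<bar>) \<le> s * be" using s0 by (intro mult_left_mono) auto
    hence "- (s * \<bar>be\<bar>) \<le> s * be" by simp
    ultimately show ?thesis by (simp add: field_simps)
  qed
  have Pe: "P = ((1 - s)/2 + s * al) *\<^sub>R a + ((1 - s)/2 + s * be) *\<^sub>R b + (s * ga) *\<^sub>R y"
    unfolding P_def by (subst xe) (simp add: complex_eq_iff algebra_simps)
  have sum1: "((1 - s)/2 + s * al) + ((1 - s)/2 + s * be) + s * ga = 1"
    unfolding al_def by (simp add: algebra_simps)
  have "s * ga \<ge> 0" using s0 ga by simp
  hence P2: "P \<in> convex hull {a,b,y}" unfolding Pe
    using A B sum1 by (intro hull3I) auto
  have "cr a b P = s * cr a b x" unfolding P_def by (rule cr_comb) simp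
  hence cP: "cr a b P > 0" using s0 cx unfolding ccw_cr by simp
  have "P \<in> convex hull {a,b}" using P1 P2 H by blast
  then obtain u v where "P = u *\<^sub>R a + v *\<^sub>R b" "u + v = 1" unfolding convex_hull_2 by auto
  hence "cr a b P = 0" using cr_comb2 by simp
  thus False using cP by simp
qed



lemma tri_card: "triangulation \<Omega> \<Longrightarrow> t \<in> \<Omega> \<Longrightarrow> card t = 3"
  unfolding triangulation_def by auto

lemma tri_ncol: "triangulation \<Omega> \<Longrightarrow> t \<in> \<Omega> \<Longrightarrow> \<not> collinear t"
  unfolding triangulation_def by auto

lemma tri_fin: "triangulation \<Omega> \<Longrightarrow> finite \<Omega>"
  unfolding triangulation_def by auto

lemma split3:
  assumes "card t = 3" "v \<in> t"
  shows "\<exists>p q. t = {v,p,q} \<and> v \<noteq> p \<and> v \<noteq> q \<and> p \<noteq> q"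
proof -
  obtain x y z where t: "t = {x,y,z}" "x \<noteq> y" "y \<noteq> z" "x \<noteq> z"
    using assms(1) card_3_iff by metis
  show ?thesis using assms(2) t by (auto simp: insert_commute)
qed

lemma nx_char:
  assumes "t = {a,b,c}" "a \<noteq> b" "a \<noteq> c" "b \<noteq> c" "ccw a b c"
  shows "next_vertex t a = b"
  unfolding next_vertex_def
proof (rule the_equality)
  show "b \<in> t \<and> b \<noteq> a \<and> (\<forall>u\<in>t - {a, b}. ccw a b u)" using assms by auto
next
  fix w assume w: "w \<in> t \<and> w \<noteq> a \<and> (\<forall>u\<in>t - {a, w}. ccw a w u)"
  show "w = b"
  proof (rule ccontr)
    assume "w \<noteq> b"
    hence "w = c" using w assms by auto
    hence "ccw a c b" using w assms by auto
    thus False using ccw_anti assms(5) by blast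
  qed
qed

lemma nxp:
  assumes T: "triangulation \<Omega>" and t: "t \<in> \<Omega>" and v: "v \<in> t"
  shows "\<exists>w x. t = {v,w,x} \<and> v \<noteq> w \<and> v \<noteq> x \<and> w \<noteq> x \<and> ccw v w x \<and>
     next_vertex t v = w \<and> next_vertex t w = x \<and> next_vertex t x = v"
proof -
  obtain p q where pq: "t = {v,p,q}" "v \<noteq> p" "v \<noteq> q" "p \<noteq> q"
    using split3[OF tri_card[OF T t] v] by blast
  have disj: "ccw v p q \<or> ccw v q p" using ccw_tri tri_ncol[OF T t] pq(1) by simp
  have gen: "\<exists>w x. t = {v,w,x} \<and> v \<noteq> w \<and> v \<noteq> x \<and> w \<noteq> x \<and> ccw v w x \<and>
     next_vertex t v = w \<and> next_vertex t w = x \<and> next_vertex t x = v"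
    if "t = {v,w,x}" "v \<noteq> w" "v \<noteq> x" "w \<noteq> x" "ccw v w x" for w x
  proof -
    have "next_vertex t v = w" by (rule nx_char) (use that in auto)
    moreover have "next_vertex t w = x" by (rule nx_char[of _ _ _ v]) (use that ccw_cyc in auto)
    moreover have "next_vertex t x = v" by (rule nx_char[of _ _ _ w]) (use that ccw_cyc in auto)
    ultimately show ?thesis using that by blast
  qed
  from disj show ?thesis
  proof
    assume "ccw v p q" thus ?thesis using gen pq by blast
  next
    assume "ccw v q p" thus ?thesis using gen[of q p] pq by (auto simp: insert_commute)
  qed
qed

lemma side:
  assumes T: "triangulation \<Omega>" and t: "t \<in> \<Omega>" and vw: "v \<in> t" "w \<in> t" "v \<noteq> w"
  shows "\<exists>x\<in>t. x \<noteq> v \<and> x \<noteq> w \<and> (ccw v w x \<or> ccw w v x)"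
proof -
  obtain w' x where h: "t = {v,w',x}" "v \<noteq> w'" "v \<noteq> x" "w' \<noteq> x" "ccw v w' x"
    using nxp[OF T t vw(1)] by blast
  show ?thesis
  proof (cases "w = w'")
    case True thus ?thesis using h by auto
  next
    case False
    hence "w = x" using h vw by auto
    thus ?thesis using h ccw_cyc[OF ccw_cyc[OF h(5)]] by auto
  qed
qed

lemma two_max:
  assumes T: "triangulation \<Omega>" and t: "t1 \<in> \<Omega>" "t2 \<in> \<Omega>" "t3 \<in> \<Omega>"
    and d: "t1 \<noteq> t2" "t1 \<noteq> t3" "t2 \<noteq> t3"
    and e: "v \<in> t1" "w \<in> t1" "v \<in> t2" "w \<in> t2" "v \<in> t3" "w \<in> t3" "v \<noteq> w"
  shows False
proof -
  obtain x1 where x1: "x1 \<in> t1" "x1 \<noteq> v" "x1 \<noteq> w" "ccw v w x1 \<or> ccw w v x1"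
    using side[OF T t(1) e(1,2,7)] by blast
  obtain x2 where x2: "x2 \<in> t2" "x2 \<noteq> v" "x2 \<noteq> w" "ccw v w x2 \<or> ccw w v x2"
    using side[OF T t(2) e(3,4,7)] by blast
  obtain x3 where x3: "x3 \<in> t3" "x3 \<noteq> v" "x3 \<noteq> w" "ccw v w x3 \<or> ccw w v x3"
    using side[OF T t(3) e(5,6,7)] by blast
  have S1: "\<not> (ccw v w xi \<and> ccw v w xj)"
    if "ti \<in> \<Omega>" "tj \<in> \<Omega>" "ti \<noteq> tj" "v \<in> ti" "w \<in> ti" "v \<in> tj" "w \<in> tj"
       "xi \<in> ti" "xi \<noteq> v" "xi \<noteq> w" "xj \<in> tj" "xj \<noteq> v" "xj \<noteq> w" for ti tj xi xj
    using same_side[OF T, of ti tj v w xi xj] that e(7) by blast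
  have S2: "\<not> (ccw w v xi \<and> ccw w v xj)"
    if "ti \<in> \<Omega>" "tj \<in> \<Omega>" "ti \<noteq> tj" "v \<in> ti" "w \<in> ti" "v \<in> tj" "w \<in> tj"
       "xi \<in> ti" "xi \<noteq> v" "xi \<noteq> w" "xj \<in> tj" "xj \<noteq> v" "xj \<noteq> w" for ti tj xi xj
    using same_side[OF T, of ti tj w v xi xj] that e(7) by blast
  have a: "\<not> (ccw v w x1 \<and> ccw v w x2)" "\<not> (ccw w v x1 \<and> ccw w v x2)"
    using S1[OF t(1,2) d(1)] S2[OF t(1,2) d(1)] e x1 x2 by auto
  have b: "\<not> (ccw v w x1 \<and> ccw v w x3)" "\<not> (ccw w v x1 \<and> ccw w v x3)"
    using S1[OF t(1,3) d(2)] S2[OF t(1,3) d(2)] e x1 x3 by auto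
  have c: "\<not> (ccw v w x2 \<and> ccw v w x3)" "\<not> (ccw w v x2 \<and> ccw w v x3)"
    using S1[OF t(2,3) d(3)] S2[OF t(2,3) d(3)] e x2 x3 by auto
  show False using a b c x1(4) x2(4) x3(4) by blast
qed



lemma card2_other:
  assumes "finite A" "card A \<ge> 2" shows "\<exists>x\<in>A. x \<noteq> t"
proof (rule ccontr)
  assume "\<not> ?thesis" hence "A \<subseteq> {t}" by auto
  hence "card A \<le> 1" using card_mono[of "{t}" A] by auto
  thus False using assms by simp
qed

lemma nf_card: "\<not> frontier_edge \<Omega> lg e \<Longrightarrow> 2 \<le> card {t\<in>\<Omega>. e \<subseteq> t}"
  unfolding frontier_edge_def by (simp add: not_le)

lemma nbr:
  assumes T: "triangulation \<Omega>" and t: "t \<in> \<Omega>" and vw: "v \<in> t" "w \<in> t" "v \<noteq> w"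
    and nf: "\<not> frontier_edge \<Omega> lg {v,w}"
  shows "neighbor_across \<Omega> t {v,w} \<in> \<Omega> \<and> neighbor_across \<Omega> t {v,w} \<noteq> t \<and>
         {v,w} \<subseteq> neighbor_across \<Omega> t {v,w} \<and>
         (\<forall>t'\<in>\<Omega>. t' \<noteq> t \<and> {v,w} \<subseteq> t' \<longrightarrow> t' = neighbor_across \<Omega> t {v,w})"
proof -
  have c2: "card {t\<in>\<Omega>. {v,w} \<subseteq> t} \<ge> 2" by (rule nf_card[OF nf])
  have fi: "finite {t\<in>\<Omega>. {v,w} \<subseteq> t}" using tri_fin[OF T] by auto
  obtain t1 where t1: "t1 \<in> \<Omega>" "{v,w} \<subseteq> t1" "t1 \<noteq> t"
    using card2_other[OF fi c2, of t] by auto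
  have uniq: "t' = t1" if "t' \<in> \<Omega>" "t' \<noteq> t" "{v,w} \<subseteq> t'" for t'
  proof (rule ccontr)
    assume "t' \<noteq> t1"
    thus False using two_max[OF T t t1(1) that(1)] t1 that vw by auto
  qed
  have "neighbor_across \<Omega> t {v,w} = t1" unfolding neighbor_across_def
  proof (rule the_equality)
    show "t1 \<in> \<Omega> \<and> t1 \<noteq> t \<and> {v, w} \<subseteq> t1" using t1 by simp
  next
    fix t' assume "t' \<in> \<Omega> \<and> t' \<noteq> t \<and> {v, w} \<subseteq> t'"
    thus "t' = t1" using uniq by blast
  qed
  thus ?thesis using t1 uniq by blast
qed

lemma step_eq: "poly_step \<Omega> lg (t,v) = (if frontier_edge \<Omega> lg {v, next_vertex t v}
   then (t, next_vertex t v) else (neighbor_across \<Omega> t {v, next_vertex t v}, v))"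
  by (simp add: poly_step_def Let_def)

definition SS :: "complex set set \<Rightarrow> (complex set \<times> complex) set" where
  "SS \<Omega> = {(t,v). t \<in> \<Omega> \<and> v \<in> t}"

lemma nx_in:
  assumes T: "triangulation \<Omega>" and t: "t \<in> \<Omega>" and v: "v \<in> t"
  shows "next_vertex t v \<in> t" "next_vertex t v \<noteq> v"
  using nxp[OF T t v] by auto

lemma step_SS:
  assumes T: "triangulation \<Omega>" and s: "s \<in> SS \<Omega>"
  shows "poly_step \<Omega> lg s \<in> SS \<Omega>"
proof -
  obtain t v where tv: "s = (t,v)" "t \<in> \<Omega>" "v \<in> t" using s unfolding SS_def by auto
  note n = nx_in[OF T tv(2,3)]
  show ?thesis
  proof (cases "frontier_edge \<Omega> lg {v, next_vertex t v}")
    case True thus ?thesis using tv n by (simp add: step_eq SS_def)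
  next
    case False
    thus ?thesis using tv n nbr[OF T tv(2) tv(3) n(1) n(2)[symmetric] False] by (simp add: step_eq SS_def)
  qed
qed

lemma mixed:
  assumes T: "triangulation \<Omega>" and t1: "t1 \<in> \<Omega>" "v1 \<in> t1" and t2: "t2 \<in> \<Omega>" "v2 \<in> t2"
    and F1: "frontier_edge \<Omega> lg {v1, next_vertex t1 v1}"
    and F2: "\<not> frontier_edge \<Omega> lg {v2, next_vertex t2 v2}"
    and eq: "(t1, next_vertex t1 v1) = (neighbor_across \<Omega> t2 {v2, next_vertex t2 v2}, v2)"
  shows False
proof -
  define w2 where "w2 = next_vertex t2 v2"
  note n2 = nx_in[OF T t2]
  have N: "t1 \<in> \<Omega> \<and> t1 \<noteq> t2 \<and> {v2,w2} \<subseteq> t1"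
    using nbr[OF T t2 n2(1) n2(2)[symmetric] F2] eq unfolding w2_def by auto
  obtain v x where h: "t1 = {v1,v,x}" "v1 \<noteq> v" "v1 \<noteq> x" "v \<noteq> x" "ccw v1 v x"
     "next_vertex t1 v1 = v"
    using nxp[OF T t1] by blast
  have "next_vertex t1 v1 = v2" using arg_cong[OF eq, of snd] by simp
  hence vv: "v2 = v" using h(6) by simp
  have "w2 \<noteq> v1"
  proof
    assume "w2 = v1"
    hence "{v2, w2} = {v1, next_vertex t1 v1}" using vv h by auto
    thus False using F1 F2 unfolding w2_def by simp
  qed
  moreover have "w2 \<in> t1" "w2 \<noteq> v" using N n2 vv unfolding w2_def by auto
  ultimately have wx: "w2 = x" using h by auto
  obtain w' y where h2: "t2 = {v2,w',y}" "v2 \<noteq> w'" "v2 \<noteq> y" "w' \<noteq> y" "ccw v2 w' y"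
     "next_vertex t2 v2 = w'"
    using nxp[OF T t2] by blast
  have "w' = w2" using h2 w2_def by simp
  show False
    using same_side[OF T t1(1) t2(1), of v x v1 y] N h h2 wx vv \<open>w' = w2\<close> ccw_cyc[OF h(5)]
    by auto
qed

lemma inj_step:
  assumes T: "triangulation \<Omega>"
  shows "inj_on (poly_step \<Omega> lg) (SS \<Omega>)"
proof (rule inj_onI)
  fix s1 s2 assume s1: "s1 \<in> SS \<Omega>" and s2: "s2 \<in> SS \<Omega>" and eq: "poly_step \<Omega> lg s1 = poly_step \<Omega> lg s2"
  obtain t1 v1 where a: "s1 = (t1,v1)" "t1 \<in> \<Omega>" "v1 \<in> t1" using s1 unfolding SS_def by auto
  obtain t2 v2 where b: "s2 = (t2,v2)" "t2 \<in> \<Omega>" "v2 \<in> t2" using s2 unfolding SS_def by auto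
  define w1 where "w1 = next_vertex t1 v1"
  define w2 where "w2 = next_vertex t2 v2"
  note n1 = nx_in[OF T a(2,3)] and n2 = nx_in[OF T b(2,3)]
  consider (FF) "frontier_edge \<Omega> lg {v1,w1}" "frontier_edge \<Omega> lg {v2,w2}"
    | (FN) "frontier_edge \<Omega> lg {v1,w1}" "\<not> frontier_edge \<Omega> lg {v2,w2}"
    | (NF) "\<not> frontier_edge \<Omega> lg {v1,w1}" "frontier_edge \<Omega> lg {v2,w2}"
    | (NN) "\<not> frontier_edge \<Omega> lg {v1,w1}" "\<not> frontier_edge \<Omega> lg {v2,w2}" by blast
  then show "s1 = s2"
  proof cases
    case FF
    have p1: "poly_step \<Omega> lg (t1,v1) = (t1,w1)" using FF by (simp add: step_eq w1_def)
    have p2: "poly_step \<Omega> lg (t2,v2) = (t2,w2)" using FF by (simp add: step_eq w2_def)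
    have "(t1, w1) = (t2, w2)" by (metis eq a(1) b(1) p1 p2)
    hence tt: "t1 = t2" and ww: "w1 = w2" by simp_all
    obtain w x where h: "t1 = {v1,w,x}" "v1 \<noteq> w" "v1 \<noteq> x" "w \<noteq> x"
      "next_vertex t1 v1 = w" "next_vertex t1 w = x" "next_vertex t1 x = v1"
      using nxp[OF T a(2,3)] by blast
    have "v2 \<in> {v1,w,x}" using b tt h by simp
    moreover have "next_vertex t1 v2 = w" using ww tt h w1_def w2_def by simp
    ultimately have "v2 = v1" using h by auto
    thus ?thesis using a b tt by simp
  next
    case FN
    have p1: "poly_step \<Omega> lg (t1,v1) = (t1,w1)" using FN by (simp add: step_eq w1_def)
    have p2: "poly_step \<Omega> lg (t2,v2) = (neighbor_across \<Omega> t2 {v2, w2}, v2)" using FN by (simp add: step_eq w2_def)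
    have "(t1, w1) = (neighbor_across \<Omega> t2 {v2, w2}, v2)" by (metis eq a(1) b(1) p1 p2)
    hence False using mixed[OF T a(2,3) b(2,3) FN(1)[unfolded w1_def] FN(2)[unfolded w2_def]]
      unfolding w1_def w2_def by blast
    thus ?thesis ..
  next
    case NF
    have p1: "poly_step \<Omega> lg (t2,v2) = (t2,w2)" using NF by (simp add: step_eq w2_def)
    have p2: "poly_step \<Omega> lg (t1,v1) = (neighbor_across \<Omega> t1 {v1, w1}, v1)" using NF by (simp add: step_eq w1_def)
    have "(t2, w2) = (neighbor_across \<Omega> t1 {v1, w1}, v1)" by (metis eq a(1) b(1) p1 p2)
    hence False using mixed[OF T b(2,3) a(2,3) NF(2)[unfolded w2_def] NF(1)[unfolded w1_def]]
      unfolding w1_def w2_def by blast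
    thus ?thesis ..
  next
    case NN
    define TT where "TT = neighbor_across \<Omega> t1 {v1,w1}"
    have p1: "poly_step \<Omega> lg (t1,v1) = (TT, v1)" using NN by (simp add: step_eq w1_def TT_def)
    have p2: "poly_step \<Omega> lg (t2,v2) = (neighbor_across \<Omega> t2 {v2, w2}, v2)" using NN by (simp add: step_eq w2_def)
    have "(TT, v1) = (neighbor_across \<Omega> t2 {v2, w2}, v2)" by (metis eq a(1) b(1) p1 p2)
    hence vv: "v1 = v2" and TT2: "TT = neighbor_across \<Omega> t2 {v2,w2}" by simp_all
    have N1: "TT \<in> \<Omega> \<and> TT \<noteq> t1 \<and> {v1,w1} \<subseteq> TT"
      using nbr[OF T a(2,3) n1(1) n1(2)[symmetric] NN(1)[unfolded w1_def]] unfolding TT_def w1_def by auto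
    have N2: "TT \<in> \<Omega> \<and> TT \<noteq> t2 \<and> {v2,w2} \<subseteq> TT"
      using nbr[OF T b(2,3) n2(1) n2(2)[symmetric] NN(2)[unfolded w2_def]] unfolding TT2 w2_def by auto
    show ?thesis
    proof (rule ccontr)
      assume "s1 \<noteq> s2"
      hence ne: "t1 \<noteq> t2" using a b vv by auto
      show False
      proof (cases "w1 = w2")
        case True
        thus False using two_max[OF T a(2) b(2), of TT v1 w1] N1 N2 ne vv a b n1 n2 unfolding w1_def w2_def
          by auto
      next
        case False
        obtain w x where h: "TT = {v1,w,x}" "v1 \<noteq> w" "v1 \<noteq> x" "w \<noteq> x" "ccw v1 w x"
          using nxp[OF T, of TT v1] N1 by auto
        obtain y1 where y1: "t1 = {v1,w1,y1}" "v1 \<noteq> y1" "w1 \<noteq> y1" "ccw v1 w1 y1"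
          using nxp[OF T a(2,3)] unfolding w1_def by auto
        obtain y2 where y2: "t2 = {v2,w2,y2}" "v2 \<noteq> y2" "w2 \<noteq> y2" "ccw v2 w2 y2"
          using nxp[OF T b(2,3)] unfolding w2_def by auto
        have w12: "w1 \<noteq> v1" "w2 \<noteq> v1" using n1 n2 vv unfolding w1_def w2_def by auto
        have "(w1 = w \<and> w2 = x) \<or> (w1 = x \<and> w2 = w)" using h N1 N2 False w12 vv by auto
        thus False
        proof
          assume c: "w1 = w \<and> w2 = x"
          show False using same_side[OF T N1[THEN conjunct1] a(2), of v1 w1 w2 y1]
            N1 N2 h y1 c w12 vv by auto
        next
          assume c: "w1 = x \<and> w2 = w"
          show False using same_side[OF T N1[THEN conjunct1] b(2), of v1 w2 w1 y2]
            N1 N2 h y2 c w12 vv by auto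
        qed
      qed
    qed
  qed
qed



lemma funpow_SS:
  assumes T: "triangulation \<Omega>" and s: "s \<in> SS \<Omega>"
  shows "(poly_step \<Omega> lg ^^ i) s \<in> SS \<Omega>"
  by (induction i) (auto simp: s step_SS[OF T])

lemma cancel:
  assumes T: "triangulation \<Omega>"
  shows "s \<in> SS \<Omega> \<Longrightarrow> s' \<in> SS \<Omega> \<Longrightarrow> (poly_step \<Omega> lg ^^ i) s = (poly_step \<Omega> lg ^^ i) s' \<Longrightarrow> s = s'"
proof (induction i arbitrary: s s')
  case 0 thus ?case by simp
next
  case (Suc i)
  have "(poly_step \<Omega> lg ^^ i) (poly_step \<Omega> lg s) = (poly_step \<Omega> lg ^^ i) (poly_step \<Omega> lg s')"
    using Suc.prems(3) unfolding funpow_Suc_right o_apply .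
  hence "poly_step \<Omega> lg s = poly_step \<Omega> lg s'"
    using Suc.IH step_SS[OF T Suc.prems(1)] step_SS[OF T Suc.prems(2)] by blast
  thus ?case using inj_step[OF T] Suc.prems(1,2) by (meson inj_onD)
qed

lemma periodic:
  assumes "(f ^^ p) s = s" shows "(f ^^ (m * p)) s = s"
proof (induction m)
  case 0 thus ?case by simp
next
  case (Suc m)
  have "(f ^^ (Suc m * p)) s = (f ^^ p) ((f ^^ (m * p)) s)" by (simp add: funpow_add)
  thus ?case using assms Suc.IH by simp
qed

theorem lemma1:
  fixes \<Omega> R :: "complex set set" and lg :: "complex set \<Rightarrow> complex set"
    and t0 t :: "complex set" and vi ve :: complex and n :: nat
  assumes "triangulation \<Omega>"
    and "longest_edge_choice \<Omega> lg"
    and "terminal_edge_region \<Omega> lg R"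
    and "t0 \<in> R"
    and "seed_init \<Omega> lg t0 vi ve"
    and "\<forall>j. 1 \<le> j \<and> j < n \<longrightarrow> poly_run \<Omega> lg t0 ve j \<noteq> (t0, vi)"
    and "t \<in> R"
  shows "visits \<Omega> lg t0 ve n t \<le> 3"
proof -
  note T = assms(1)
  define f where "f = poly_step \<Omega> lg"
  define s0 where "s0 = (t0, ve)"
  have RO: "R \<subseteq> \<Omega>" using assms(3) unfolding terminal_edge_region_def by auto
  have t0O: "t0 \<in> \<Omega>" and tO: "t \<in> \<Omega>" using RO assms(4,7) by auto
  obtain k where k: "k < 3" "vi \<in> t0" "ve = (next_vertex t0 ^^ k) vi"
    "{e \<in> edges_of t0. frontier_edge \<Omega> lg e} =
        {{(next_vertex t0 ^^ j) vi, (next_vertex t0 ^^ Suc j) vi} | j. j < k}"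
    using assms(5) unfolding seed_init_def by blast
  have seed: "(f ^^ j) (t0, vi) = (t0, (next_vertex t0 ^^ j) vi)" if "j \<le> k" for j
    using that
  proof (induction j)
    case 0 thus ?case by simp
  next
    case (Suc j)
    define u where "u = (next_vertex t0 ^^ j) vi"
    have "{u, next_vertex t0 u} \<in> {{(next_vertex t0 ^^ j) vi, (next_vertex t0 ^^ Suc j) vi} | j. j < k}"
      using Suc.prems unfolding u_def by auto
    hence "frontier_edge \<Omega> lg {u, next_vertex t0 u}" using k(4) by blast
    hence "f (t0, u) = (t0, next_vertex t0 u)" unfolding f_def by (simp add: step_eq)
    thus ?case using Suc by (simp add: u_def)
  qed
  have sk: "(f ^^ k) (t0, vi) = s0" using seed[of k] k(3) unfolding s0_def by simp
  have viS: "(t0, vi) \<in> SS \<Omega>" using t0O k(2) unfolding SS_def by simp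
  have s0S: "s0 \<in> SS \<Omega>" using funpow_SS[OF T viS, where lg=lg and i=k] sk unfolding f_def by simp
  have stS: "(f ^^ i) s0 \<in> SS \<Omega>" for i using funpow_SS[OF T s0S] unfolding f_def by blast
  have canc: "x = y" if "x \<in> SS \<Omega>" "y \<in> SS \<Omega>" "(f ^^ i) x = (f ^^ i) y" for x y i
    using cancel[OF T that(1,2)] that(3) unfolding f_def by blast
  have D: "(f ^^ a) s0 \<noteq> (f ^^ b) s0" if ab: "1 \<le> a" "a < b" "b \<le> n" for a b
  proof
    assume eq: "(f ^^ a) s0 = (f ^^ b) s0"
    define p where "p = b - a"
    have pp: "1 \<le> p" "p < n" using ab unfolding p_def by auto
    have "(f ^^ b) s0 = (f ^^ a) ((f ^^ p) s0)" unfolding p_def using ab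
      by (metis funpow_add le_add_diff_inverse less_imp_le o_apply)
    hence "(f ^^ p) s0 = s0" using canc[OF stS s0S, of a] eq by metis
    define m where "m = k div p + 1"
    define q where "q = m * p - k"
    have dm: "k div p * p + k mod p = k" by simp
    have mp: "m * p = k div p * p + p" unfolding m_def by (simp add: algebra_simps)
    have "k mod p < p" using pp by simp
    hence qq: "1 \<le> q" "q \<le> p" "q + k = m * p" using dm mp unfolding q_def by linarith+
    have "(f ^^ (m * p)) s0 = s0" by (rule periodic) fact
    hence "(f ^^ k) ((f ^^ q) s0) = (f ^^ k) (t0, vi)" using sk qq(3)
      by (metis funpow_add o_apply add.commute)
    hence "(f ^^ q) s0 = (t0, vi)" using canc[OF stS viS] by blast
    moreover have "poly_run \<Omega> lg t0 ve q \<noteq> (t0, vi)" using assms(6) qq pp by auto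
    ultimately show False unfolding poly_run_def f_def s0_def by simp
  qed
  define A where "A = {i. i < n \<and> fst (poly_run \<Omega> lg t0 ve i) \<noteq> fst (poly_run \<Omega> lg t0 ve (Suc i)) \<and>
      fst (poly_run \<Omega> lg t0 ve (Suc i)) = t}"
  have pr: "poly_run \<Omega> lg t0 ve i = (f ^^ i) s0" for i unfolding poly_run_def f_def s0_def by simp
  have inj: "inj_on (\<lambda>i. (f ^^ Suc i) s0) A"
  proof (rule inj_onI)
    fix i j assume i: "i \<in> A" and j: "j \<in> A" and e: "(f ^^ Suc i) s0 = (f ^^ Suc j) s0"
    show "i = j"
    proof (rule ccontr)
      assume "i \<noteq> j"
      hence "i < j \<or> j < i" by arith
      thus False using D[of "Suc i" "Suc j"] D[of "Suc j" "Suc i"] e i j unfolding A_def by auto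
    qed
  qed
  have sub: "(\<lambda>i. (f ^^ Suc i) s0) ` A \<subseteq> Pair t ` t"
  proof
    fix x assume "x \<in> (\<lambda>i. (f ^^ Suc i) s0) ` A"
    then obtain i where i: "i \<in> A" "x = (f ^^ Suc i) s0" by blast
    have "x \<in> SS \<Omega>" using stS[of "Suc i"] i(2) by simp
    moreover have "fst x = t" using i unfolding A_def pr by simp
    ultimately show "x \<in> Pair t ` t" unfolding SS_def by force
  qed
  have ft: "finite t" using tri_card[OF T tO] card.infinite by fastforce
  have "card A = card ((\<lambda>i. (f ^^ Suc i) s0) ` A)" using card_image[OF inj] by simp
  also have "\<dots> \<le> card (Pair t ` t)" by (rule card_mono) (use ft sub in auto)
  also have "\<dots> \<le> card t" using card_image_le[OF ft] by blast
  also have "\<dots> = 3" using tri_card[OF T tO] .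
  finally show ?thesis unfolding visits_def A_def[symmetric] .
qed

end
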